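(* Let $q^\star(\cdot\mid h)$ and $q_\theta(\cdot\mid h)$ be probability measures on $[0,B]$, and for $x\in[0,B]$ let $P^{\mathrm{obs}}_{h,x}$, $Q^{\mathrm{obs}}_{h,x}$ be their pushforwards under $d\mapsto(\min\{d,x\},\mathbf{1}\{d\le x\})$. Let $\eta\in(0,1]$ and let $\mu(\cdot\mid h)$ be any probability distribution on $[0,B]$ with $\mu(\{B\}\mid h)\ge\eta$. Then $$\mathrm{KL}(q^\star(\cdot\mid h)\|q_\theta(\cdot\mid h))\le\frac1\eta\,\mathbb{E}_{X\sim\mu(\cdot\mid h)}\big[\mathrm{KL}(P^{\mathrm{obs}}_{h,X}\|Q^{\mathrm{obs}}_{h,X})\big].$$
   Context: KL denotes Kullback–Leibler divergence. In the paper $q^\star,q_\theta$ are the true and learned conditional laws of the demand $D_t\in[0,B]$ given history $h$, and $\mu$ is the deployed action distribution. *)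

theory Defs
  imports "HOL-Probability.Probability"
begin

text \<open>Extended-valued KL divergence KL(P || Q) (natural logarithm), built on the
library's KL_divergence (note: KL_divergence b Q P is KL(P || Q)).\<close>
definition KL :: "'a measure \<Rightarrow> 'a measure \<Rightarrow> ennreal" where
  "KL P Q = (if sets P = sets Q \<and> absolutely_continuous Q P \<and>
                 integrable P (entropy_density (exp 1) Q P)
             then ennreal (KL_divergence (exp 1) Q P) else \<infinity>)"

definition obs_map :: "real \<Rightarrow> real \<Rightarrow> real \<times> bool" where
  "obs_map x d = (min d x, d \<le> x)"

definition obs_law :: "real measure \<Rightarrow> real \<Rightarrow> (real \<times> bool) measure" where
  "obs_law q x = distr q (borel \<Otimes>\<^sub>M count_space UNIV) (obs_map x)"

end

theory Submission
  imports Defs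
begin

lemma ac_distr:
  assumes "absolutely_continuous Q P" "sets P = sets Q" "f \<in> measurable Q N"
  shows "absolutely_continuous (distr Q N f) (distr P N f)"
  unfolding absolutely_continuous_def
proof
  fix A assume A: "A \<in> null_sets (distr Q N f)"
  have fP: "f \<in> measurable P N" using assms(2,3) measurable_cong_sets by blast
  have As: "A \<in> sets N" using A by auto
  have "f -` A \<inter> space Q \<in> null_sets Q"
    using A assms(3) As by (auto simp: null_sets_def emeasure_distr)
  then have "f -` A \<inter> space Q \<in> null_sets P"
    using assms(1) unfolding absolutely_continuous_def by blast
  moreover have "space P = space Q" using assms(2) sets_eq_imp_space_eq by blast
  ultimately show "A \<in> null_sets (distr P N f)"
    using As fP by (auto simp: null_sets_def emeasure_distr)
qed

lemma KL_distr_inv: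
  assumes P: "prob_space P" and Q: "prob_space Q" and sP: "sets P = sets M" and sQ: "sets Q = sets M"
    and T: "T \<in> measurable M M'" and T': "T' \<in> measurable M' M"
    and inv: "\<forall>x\<in>space M. T' (T x) = x"
  shows "KL P Q \<le> KL (distr P M' T) (distr Q M' T)"
proof (cases "absolutely_continuous (distr Q M' T) (distr P M' T) \<and>
     integrable (distr P M' T) (entropy_density (exp 1) (distr Q M' T) (distr P M' T))")
  case False
  then have "KL (distr P M' T) (distr Q M' T) = top" by (simp add: KL_def)
  then show ?thesis by simp
next
  case True
  have TQ: "T \<in> measurable Q M'" using T sQ measurable_cong_sets by blast
  have TP: "T \<in> measurable P M'" using T sP measurable_cong_sets by blast
  have spP: "space P = space M" using sP sets_eq_imp_space_eq by blast
  have spQ: "space Q = space M" using sQ sets_eq_imp_space_eq by blast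
  have backR: "distr (distr R M' T) M T' = R" if "sets R = sets M" for R
  proof -
    have TR: "T \<in> measurable R M'" using T that measurable_cong_sets by blast
    have "distr (distr R M' T) M T' = distr R M (\<lambda>x. T' (T x))"
      using distr_distr[OF T' TR] by (simp add: comp_def)
    also have "\<dots> = distr R R (\<lambda>x. x)"
      using that sets_eq_imp_space_eq[OF that] inv
      by (intro distr_cong) auto
    also have "\<dots> = R" by simp
    finally show ?thesis .
  qed
  have acQP: "absolutely_continuous Q P"
  proof -
    have "absolutely_continuous (distr (distr Q M' T) M T') (distr (distr P M' T) M T')"
    proof (rule ac_distr)
      show "absolutely_continuous (distr Q M' T) (distr P M' T)" using True by blast
      show "sets (distr P M' T) = sets (distr Q M' T)" by simp
      show "T' \<in> measurable (distr Q M' T) M" using T' by simp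
    qed
    then show ?thesis using backR sP sQ by simp
  qed
  interpret Q: prob_space Q by fact
  interpret P: prob_space P by fact
  have sPQ: "sets P = sets Q" using sP sQ by simp
  have "AE x in Q. RN_deriv (distr Q M' T) (distr P M' T) (T x) = RN_deriv Q P x"
  proof -
    have T'Q: "T' \<in> measurable M' Q" using T' measurable_cong_sets[OF refl sQ] by blast
    show ?thesis using Q.RN_deriv_distr[OF TQ T'Q _ _ sPQ] inv spQ True by auto
  qed
  then have "AE x in P. RN_deriv (distr Q M' T) (distr P M' T) (T x) = RN_deriv Q P x"
    using absolutely_continuous_AE[OF sPQ acQP] by blast
  then have AE: "AE x in P. entropy_density (exp 1) (distr Q M' T) (distr P M' T) (T x)
           = entropy_density (exp 1) Q P x"
    by (rule eventually_mono) (simp add: entropy_density_def)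
  have m1: "entropy_density (exp 1) (distr Q M' T) (distr P M' T) \<in> borel_measurable M'"
    using measurable_entropy_density[of "exp 1" "distr Q M' T" "distr P M' T"] by simp
  have m1': "(\<lambda>x. entropy_density (exp 1) (distr Q M' T) (distr P M' T) (T x)) \<in> borel_measurable P"
    using m1 TP by measurable
  have m2: "entropy_density (exp 1) Q P \<in> borel_measurable P"
    using measurable_entropy_density[of "exp 1" Q P] measurable_cong_sets[OF sPQ refl] by blast
  have int: "integrable P (entropy_density (exp 1) Q P)"
    using True integrable_distr_eq[OF TP m1] integrable_cong_AE[OF m1' m2 AE] by simp
  have eq: "KL_divergence (exp 1) (distr Q M' T) (distr P M' T) = KL_divergence (exp 1) Q P"
    unfolding KL_divergence_def
    using integral_distr[OF TP m1] integral_cong_AE[OF m1' m2 AE] by simp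
  show ?thesis using True acQP int eq sPQ by (simp add: KL_def)
qed

lemma obs_law_B:
  assumes "prob_space q" "sets q = sets borel" "emeasure q {0..B} = 1"
  shows "obs_law q B = distr q (borel \<Otimes>\<^sub>M count_space UNIV) (\<lambda>d. (d, True))"
proof -
  interpret prob_space q by fact
  have "prob {0..B} = 1" using assms(3) by (simp add: emeasure_eq_measure)
  then have ae: "AE d in q. d \<in> {0..B}" by (rule AE_prob_1)
  have m1: "obs_map B \<in> measurable q (borel \<Otimes>\<^sub>M count_space UNIV)"
    unfolding obs_map_def measurable_cong_sets[OF assms(2) refl] by measurable
  have m2: "(\<lambda>d. (d, True)) \<in> measurable q (borel \<Otimes>\<^sub>M count_space UNIV)"
    unfolding measurable_cong_sets[OF assms(2) refl] by measurable
  show ?thesis unfolding obs_law_def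
    by (rule distr_cong_AE[OF refl refl _ m1 m2]) (use ae in \<open>auto simp: obs_map_def elim!: AE_mp\<close>)
qed

theorem lemmaC19:
  fixes B \<eta> :: real and qstar qtheta \<mu> :: "real measure"
  assumes "prob_space qstar" and "sets qstar = sets borel" and "emeasure qstar {0..B} = 1"
      and "prob_space qtheta" and "sets qtheta = sets borel" and "emeasure qtheta {0..B} = 1"
      and "prob_space \<mu>" and "sets \<mu> = sets borel" and "emeasure \<mu> {0..B} = 1"
      and "0 < \<eta>" and "\<eta> \<le> 1"
      and "emeasure \<mu> {B} \<ge> ennreal \<eta>"
  shows "KL qstar qtheta
           \<le> ennreal (1 / \<eta>) * (\<integral>\<^sup>+ x. KL (obs_law qstar x) (obs_law qtheta x) \<partial>\<mu>)"
proof -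
  let ?N = "borel \<Otimes>\<^sub>M count_space (UNIV::bool set)"
  let ?K = "KL (obs_law qstar B) (obs_law qtheta B)"
  have T: "(\<lambda>d::real. (d, True)) \<in> measurable borel ?N" by measurable
  have T': "fst \<in> measurable ?N borel" by measurable
  have K: "KL qstar qtheta \<le> ?K"
    unfolding obs_law_B[OF assms(1-3)] obs_law_B[OF assms(4-6)]
    by (rule KL_distr_inv[OF assms(1) assms(4) assms(2) assms(5) T T']) auto
  have "(\<integral>\<^sup>+ x. ?K * indicator {B} x \<partial>\<mu>) \<le> (\<integral>\<^sup>+ x. KL (obs_law qstar x) (obs_law qtheta x) \<partial>\<mu>)"
    by (intro nn_integral_mono) (auto split: split_indicator)
  moreover have "(\<integral>\<^sup>+ x. ?K * indicator {B} x \<partial>\<mu>) = ?K * emeasure \<mu> {B}"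
    using assms(8) by (intro nn_integral_cmult_indicator) auto
  moreover have "?K * ennreal \<eta> \<le> ?K * emeasure \<mu> {B}"
    using assms(12) by (intro mult_left_mono) auto
  ultimately have I: "ennreal \<eta> * ?K \<le> (\<integral>\<^sup>+ x. KL (obs_law qstar x) (obs_law qtheta x) \<partial>\<mu>)"
    by (simp add: mult.commute)
  have "KL qstar qtheta \<le> ennreal (1 / \<eta>) * (ennreal \<eta> * ?K)"
  proof -
    have "ennreal (1 / \<eta>) * (ennreal \<eta> * ?K) = ennreal (1 / \<eta> * \<eta>) * ?K"
      using assms(10) by (simp add: ennreal_mult[symmetric] mult.assoc[symmetric] del: ennreal_1)
    also have "\<dots> = ?K" using assms(10) by simp
    finally show ?thesis using K by simp
  qed
  also have "\<dots> \<le> ennreal (1 / \<eta>) * (\<integral>\<^sup>+ x. KL (obs_law qstar x) (obs_law qtheta x) \<partial>\<mu>)"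
    using I by (intro mult_left_mono) auto
  finally show ?thesis .
qed

end
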